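(* For every positive integer $s$, $$\sum_{n=1}^\infty\frac{(-1)^n}{n^s\,2^n\binom{2n}{n}}\in\mathsf{CMZV}^2_s.$$
   Context: For positive integers $s_1,\dots,s_k$ and complex $a_j$, $L_{s_1,\dots,s_k}(a_1,\dots,a_k)=\sum_{n_1>\cdots>n_k\ge1}\frac{a_1^{n_1}\cdots a_k^{n_k}}{n_1^{s_1}\cdots n_k^{s_k}}$. For integers $N\ge1$, $W\ge1$, $\mathsf{CMZV}^N_W$ is the $\mathbb{Q}$-linear span of all $L_{s_1,\dots,s_k}(a_1,\dots,a_k)$ with $k\ge1$, $s_1+\cdots+s_k=W$, each $a_j$ an $N$-th root of unity, and $(s_1,a_1)\ne(1,1)$. *)

theory Defs
  imports Complex_Main
begin

text \<open>A multiple polylogarithm datum is a list [(s1,a1),...,(sk,ak)].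
  MPL_part xs m is the finite nested sum over m > n1 > n2 > ... > nk >= 1.\<close>

fun MPL_part :: "(nat \<times> complex) list \<Rightarrow> nat \<Rightarrow> complex" where
  "MPL_part [] m = 1"
| "MPL_part ((s, a) # xs) m =
     (\<Sum>n\<in>{1..<m}. a ^ n / (of_nat n) ^ s * MPL_part xs n)"

text \<open>L_{s1,...,sk}(a1,...,ak): the limit of the partial sums of the outer series
  (truncating n1 < M), i.e. the series sum_{n1>...>nk>=1} in its natural ordering.\<close>

definition MPL :: "(nat \<times> complex) list \<Rightarrow> complex" where
  "MPL xs = lim (\<lambda>M. MPL_part xs M)"

definition CMZV_generators :: "nat \<Rightarrow> nat \<Rightarrow> complex set" where
  "CMZV_generators N W =
     {MPL xs | xs. xs \<noteq> [] \<and> sum_list (map fst xs) = W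
        \<and> (\<forall>p\<in>set xs. fst p \<ge> 1 \<and> snd p ^ N = 1)
        \<and> hd xs \<noteq> (1, 1)}"

definition CMZV :: "nat \<Rightarrow> nat \<Rightarrow> complex set" where
  "CMZV N W =
     {x. \<exists>S c. finite S \<and> S \<subseteq> CMZV_generators N W
        \<and> x = (\<Sum>g\<in>S. of_real (of_rat (c g)) * g)}"

end

theory Submission
  imports Defs "HOL-Analysis.Analysis" "HOL-Real_Asymp.Real_Asymp"
begin

fun rpart :: "(nat \<times> real) list \<Rightarrow> nat \<Rightarrow> real" where
  "rpart [] m = 1"
| "rpart ((s, a) # xs) m = (\<Sum>n\<in>{1..<m}. a ^ n / (real n) ^ s * rpart xs n)"

definition cw :: "(nat \<times> real) list \<Rightarrow> (nat \<times> complex) list" where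
  "cw = map (\<lambda>(s,a). (s, complex_of_real a))"

lemma MPL_part_cw: "MPL_part (cw xs) m = of_real (rpart xs m)"
  by (induction xs arbitrary: m) (auto simp: cw_def)

fun cf :: "(nat \<times> real) list \<Rightarrow> nat \<Rightarrow> real" where
  "cf [] n = 0"
| "cf ((s,a)#xs) n = a ^ n / (real n) ^ s * rpart xs n"

definition good :: "(nat \<times> real) list \<Rightarrow> bool" where
  "good w \<longleftrightarrow> (\<forall>p\<in>set w. fst p \<ge> 1 \<and> (snd p = 1 \<or> snd p = -1))"

lemma good_Cons[simp]: "good ((s,a)#w) \<longleftrightarrow> s \<ge> 1 \<and> (a = 1 \<or> a = -1) \<and> good w"
  by (auto simp: good_def)
lemma good_Nil[simp]: "good []" by (simp add: good_def)

lemma cf_0: "good w \<Longrightarrow> cf w 0 = 0"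
  by (cases w) auto

lemma rpart_sum: "good w \<Longrightarrow> w \<noteq> [] \<Longrightarrow> rpart w m = (\<Sum>n<m. cf w n)"
proof (cases w)
  case (Cons p xs)
  assume g: "good w"
  obtain s a where p: "p = (s,a)" by force
  have s: "s \<ge> 1" using g Cons p by auto
  have "(\<Sum>n<m. cf w n) = (\<Sum>n\<in>{1..<m}. cf w n)"
  proof (cases m)
    case (Suc k)
    have "{..<m} = insert 0 {1..<m}" using Suc by auto
    then show ?thesis using s Cons p by simp
  qed simp
  then show ?thesis using Cons p by simp
qed simp

lemma rpart_Suc: "good w \<Longrightarrow> w \<noteq> [] \<Longrightarrow> rpart w (Suc m) = rpart w m + cf w m"
  by (simp add: rpart_sum)

definition B :: "nat \<Rightarrow> real" where "B m = (\<Sum>n\<in>{1..<m}. 1 / real n)"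

lemma B_nonneg: "B m \<ge> 0" unfolding B_def by (intro sum_nonneg) auto

lemma B_mono: "n \<le> m \<Longrightarrow> B n \<le> B m"
  unfolding B_def by (intro sum_mono2) auto

lemma rpart_bound: "good w \<Longrightarrow> \<bar>rpart w m\<bar> \<le> B m ^ length w"
proof (induction w arbitrary: m)
  case Nil then show ?case by simp
next
  case (Cons p xs)
  obtain s a where p: "p = (s,a)" by force
  have s: "s \<ge> 1" and a: "a = 1 \<or> a = -1" and g: "good xs" using Cons.prems p by auto
  have "\<bar>rpart (p#xs) m\<bar> \<le> (\<Sum>n\<in>{1..<m}. \<bar>a ^ n / (real n) ^ s * rpart xs n\<bar>)"
    unfolding p rpart.simps by (rule sum_abs)
  also have "\<dots> \<le> (\<Sum>n\<in>{1..<m}. 1 / real n * B m ^ length xs)"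
  proof (intro sum_mono)
    fix n assume n: "n \<in> {1..<m}"
    have an: "\<bar>a ^ n\<bar> = 1" using a by (auto simp: power_abs)
    have "1 / real n ^ s \<le> 1 / real n"
    proof -
      have "real n \<le> real n ^ s" using n s
        by (metis One_nat_def atLeastLessThan_iff of_nat_1 of_nat_le_iff of_nat_power power_increasing power_one_right)
      then show ?thesis using n by (intro divide_left_mono) auto
    qed
    moreover have "\<bar>rpart xs n\<bar> \<le> B m ^ length xs"
      using Cons.IH[OF g, of n] B_mono[of n m] n B_nonneg
      by (meson atLeastLessThan_iff less_imp_le order_trans power_mono)
    ultimately have "1 / real n ^ s * \<bar>rpart xs n\<bar> \<le> 1 / real n * B m ^ length xs"
      by (intro mult_mono) auto
    then show "\<bar>a ^ n / (real n) ^ s * rpart xs n\<bar> \<le> 1 / real n * B m ^ length xs"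
      using an by (simp add: abs_mult)
  qed
  also have "\<dots> = B m ^ length (p#xs)"
    by (simp add: B_def sum_distrib_right)
  finally show ?case .
qed

lemma B_le_ln: assumes "m \<ge> 1" shows "B m \<le> 1 + ln (real m)"
proof -
  obtain n where m: "m = Suc n" using assms by (cases m) auto
  have "B m \<le> (\<Sum>n\<in>{1..m}. 1 / real n)"
    unfolding B_def by (intro sum_mono2) auto
  also have "\<dots> = harm m" unfolding harm_def by (simp add: inverse_eq_divide)
  also have "harm (Suc n) - ln (real (Suc n)) \<le> harm (Suc 0) - ln (real (Suc 0))"
    using decseq_harm_diff_ln unfolding decseq_def by (metis le0)
  then have "harm m \<le> 1 + ln (real m)" using m by (simp add: harm_def)
  finally show ?thesis .
qed

lemma ln_pow_bound:
  assumes "m \<ge> 1"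
  shows "(1 + ln (real m)) ^ k \<le> (2 * real k + 2) ^ k * sqrt (real m)"
proof -
  define e where "e = 2 * real k + 2"
  have e: "e \<ge> 2" using e_def by simp
  define y where "y = real m powr (1 / e)"
  have m1: "real m \<ge> 1" using assms by simp
  have y1: "y \<ge> 1" unfolding y_def using m1 e by (simp add: ge_one_powr_ge_zero)
  have lny: "ln y = ln (real m) / e" unfolding y_def using m1 by (simp add: ln_powr)
  have "ln y \<le> y - 1" using y1 by (intro ln_le_minus_one) auto
  then have "ln (real m) \<le> e * (y - 1)" using lny e by (simp add: field_simps)
  then have h: "1 + ln (real m) \<le> e * y" using e y1 by (simp add: algebra_simps)
  have l0: "0 \<le> 1 + ln (real m)" using m1 by simp
  have "(1 + ln (real m)) ^ k \<le> (e * y) ^ k" using h l0 by (intro power_mono) auto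
  also have "\<dots> = e ^ k * y ^ k" by (simp add: power_mult_distrib)
  also have "y ^ k = real m powr (real k / e)"
    unfolding y_def using m1 by (simp add: powr_realpow [symmetric] powr_powr)
  also have "real m powr (real k / e) \<le> real m powr (1/2)"
    using m1 e by (intro powr_mono) (auto simp: e_def field_simps)
  also have "real m powr (1/2) = sqrt (real m)" using m1 by (simp add: powr_half_sqrt)
  finally show ?thesis using e by (simp add: e_def mult_left_mono)
qed

lemma rpart_sqrt_bound:
  assumes "good w"
  shows "\<exists>C\<ge>0. \<forall>m\<ge>1. \<bar>rpart w m\<bar> \<le> C * sqrt (real m)"
proof (intro exI conjI allI impI)
  let ?k = "length w"
  show "(2 * real ?k + 2) ^ ?k \<ge> 0" by simp
  fix m :: nat assume m: "m \<ge> 1"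
  have "\<bar>rpart w m\<bar> \<le> B m ^ ?k" by (rule rpart_bound[OF assms])
  also have "\<dots> \<le> (1 + ln (real m)) ^ ?k" using B_le_ln[OF m] B_nonneg by (intro power_mono) auto
  also have "\<dots> \<le> (2 * real ?k + 2) ^ ?k * sqrt (real m)" by (rule ln_pow_bound[OF m])
  finally show "\<bar>rpart w m\<bar> \<le> (2 * real ?k + 2) ^ ?k * sqrt (real m)" .
qed

lemma cf_bound:
  assumes "good w"
  shows "\<exists>C\<ge>0. \<forall>n\<ge>1. \<bar>cf w n\<bar> \<le> C * sqrt (real n) / real n"
proof (cases w)
  case Nil then show ?thesis by (intro exI[of _ 0]) auto
next
  case (Cons p r)
  obtain s a where p: "p = (s,a)" by force
  have s: "s \<ge> 1" and a: "a = 1 \<or> a = -1" and g: "good r" using assms Cons p by auto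
  obtain C where C: "C \<ge> 0" "\<forall>m\<ge>1. \<bar>rpart r m\<bar> \<le> C * sqrt (real m)"
    using rpart_sqrt_bound[OF g] by blast
  show ?thesis
  proof (intro exI[of _ C] conjI allI impI)
    fix n :: nat assume n: "n \<ge> 1"
    have an: "\<bar>a ^ n\<bar> = 1" using a by (auto simp: power_abs)
    have "1 / real n ^ s \<le> 1 / real n"
    proof -
      have "real n \<le> real n ^ s" using n s
        by (metis of_nat_1 of_nat_le_iff of_nat_power power_increasing power_one_right)
      then show ?thesis using n by (intro divide_left_mono) auto
    qed
    then have "1 / real n ^ s * \<bar>rpart r n\<bar> \<le> 1 / real n * (C * sqrt (real n))"
      using C n by (intro mult_mono) auto
    then show "\<bar>cf w n\<bar> \<le> C * sqrt (real n) / real n"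
      using an Cons p by (simp add: abs_mult)
  qed (use C in auto)
qed

lemma cf_bounded:
  assumes "good w"
  shows "\<exists>C\<ge>0. \<forall>n. \<bar>cf w n\<bar> \<le> C"
proof -
  obtain C where C: "C \<ge> 0" "\<forall>n\<ge>1. \<bar>cf w n\<bar> \<le> C * sqrt (real n) / real n"
    using cf_bound[OF assms] by blast
  show ?thesis
  proof (intro exI[of _ C] conjI allI)
    fix n :: nat
    show "\<bar>cf w n\<bar> \<le> C"
    proof (cases "n = 0")
      case True then show ?thesis using cf_0[OF assms] C by simp
    next
      case False
      have "sqrt (real n) \<le> real n"
      proof -
        have "1 \<le> real n" using False by simp
        then have "real n \<le> real n * real n" by (simp add: mult_le_cancel_left1)
        then show ?thesis by (simp add: real_sqrt_le_iff' power2_eq_square)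
      qed
      then have "C * sqrt (real n) \<le> C * real n" using C by (intro mult_left_mono) auto
      then have "C * sqrt (real n) / real n \<le> C" using False by (simp add: divide_le_eq)
      moreover have "\<bar>cf w n\<bar> \<le> C * sqrt (real n) / real n" using C(2) False by simp
      ultimately show ?thesis by linarith
    qed
  qed (use C in auto)
qed

lemma rpart_Suc': "good w \<Longrightarrow> rpart w (Suc m) = rpart w m + cf w m"
  by (cases "w = []") (auto simp: rpart_Suc)

lemma summable_sqrt_div_sq: "summable (\<lambda>n. sqrt (real n) / real n ^ 2)"
proof -
  have "(\<lambda>n. sqrt (real n) / real n ^ 2) = (\<lambda>n. real n powr (-3/2))"
  proof
    fix n :: nat
    show "sqrt (real n) / real n ^ 2 = real n powr (-3/2)"
    proof (cases "n = 0")
      case False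
      have "real n powr (-3/2) = real n powr (1/2 - 2)" by simp
      also have "\<dots> = real n powr (1/2) / real n powr 2"
        by (rule powr_diff)
      also have "\<dots> = sqrt (real n) / real n ^ 2"
        using False by (simp add: powr_half_sqrt powr_numeral)
      finally show ?thesis by simp
    qed simp
  qed
  then show ?thesis by (simp add: summable_real_powr_iff)
qed

lemma alt_summable:
  fixes b :: "nat \<Rightarrow> real"
  assumes b0: "b \<longlonglongrightarrow> 0" and bv: "summable (\<lambda>n. \<bar>b (Suc n) - b n\<bar>)"
  shows "summable (\<lambda>n. (-1) ^ n * b n)"
proof -
  define E :: "nat \<Rightarrow> real" where "E n = (\<Sum>k<n. (-1) ^ k)" for n
  have Ep: "E n = (if even n then 0 else 1)" for n
    by (induction n) (auto simp: E_def)
  have E01: "E n = 0 \<or> E n = 1" for n using Ep[of n] by auto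
  have Eb: "\<bar>E n\<bar> \<le> 1" for n using E01[of n] by auto
  have id: "(\<Sum>n<N. (-1) ^ n * b n) = E N * b N - (\<Sum>n<N. E (Suc n) * (b (Suc n) - b n))" for N
  proof (induction N)
    case 0 then show ?case by (simp add: E_def)
  next
    case (Suc N)
    have "E (Suc N) = E N + (-1) ^ N" by (simp add: E_def)
    then show ?case using Suc by (simp add: algebra_simps)
  qed
  have s1: "summable (\<lambda>n. E (Suc n) * (b (Suc n) - b n))"
  proof (rule summable_comparison_test'[OF bv])
    fix n :: nat
    show "norm (E (Suc n) * (b (Suc n) - b n)) \<le> \<bar>b (Suc n) - b n\<bar>"
      using Eb[of "Suc n"] by (simp add: abs_mult mult_left_le_one_le)
  qed
  have t1: "(\<lambda>N. E N * b N) \<longlonglongrightarrow> 0"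
  proof (rule Lim_null_comparison[of _ "\<lambda>N. \<bar>b N\<bar>"])
    show "\<forall>\<^sub>F N in sequentially. norm (E N * b N) \<le> \<bar>b N\<bar>"
      using Eb by (intro always_eventually allI) (simp add: abs_mult mult_left_le_one_le)
    show "(\<lambda>N. \<bar>b N\<bar>) \<longlonglongrightarrow> 0" using tendsto_rabs_zero[OF b0] .
  qed
  have "(\<lambda>N. E N * b N - (\<Sum>n<N. E (Suc n) * (b (Suc n) - b n)))
        \<longlonglongrightarrow> 0 - (\<Sum>n. E (Suc n) * (b (Suc n) - b n))"
    by (intro tendsto_diff t1 summable_LIMSEQ s1)
  then have "(\<lambda>n. (-1) ^ n * b n) sums (0 - (\<Sum>n. E (Suc n) * (b (Suc n) - b n)))"
    unfolding sums_def id .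
  then show ?thesis by (rule sums_summable)
qed

definition adm :: "(nat \<times> real) list \<Rightarrow> bool" where
  "adm w \<longleftrightarrow> good w \<and> w \<noteq> [] \<and> hd w \<noteq> (1, 1)"

lemma summable_cf:
  assumes "adm w"
  shows "summable (cf w)"
proof -
  obtain s a r where w: "w = (s,a)#r" and g: "good w" and h: "(s,a) \<noteq> (1,1)"
    using assms unfolding adm_def by (metis list.collapse list.sel(1) prod.collapse)
  have s: "s \<ge> 1" and a: "a = 1 \<or> a = -1" and gr: "good r" using g w by auto
  obtain C where C: "C \<ge> 0" "\<forall>m\<ge>1. \<bar>rpart r m\<bar> \<le> C * sqrt (real m)"
    using rpart_sqrt_bound[OF gr] by blast
  have an: "\<bar>a ^ n\<bar> = 1" for n using a by (auto simp: power_abs)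
  show ?thesis
  proof (cases "s \<ge> 2")
    case True
    show ?thesis
    proof (rule summable_comparison_test'[where N = 1])
      show "summable (\<lambda>n. C * (sqrt (real n) / real n ^ 2))"
        by (intro summable_mult summable_sqrt_div_sq)
      fix n :: nat assume n: "1 \<le> n"
      have "real n ^ 2 \<le> real n ^ s" using n True by (intro power_increasing) auto
      then have "1 / real n ^ s \<le> 1 / real n ^ 2" using n by (intro divide_left_mono) auto
      then have "1 / real n ^ s * \<bar>rpart r n\<bar> \<le> 1 / real n ^ 2 * (C * sqrt (real n))"
        using C n by (intro mult_mono) auto
      then show "norm (cf w n) \<le> C * (sqrt (real n) / real n ^ 2)"
        using an w by (simp add: abs_mult)
    qed
  next
    case False
    then have s1: "s = 1" using s by simp
    then have am: "a = -1" using h a by auto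
    define b where "b n = rpart r n / real n" for n
    have cfw: "cf w = (\<lambda>n. (-1) ^ n * b n)" using w s1 am by (auto simp: b_def)
    obtain C1 where C1: "C1 \<ge> 0" "\<forall>n\<ge>1. \<bar>cf r n\<bar> \<le> C1 * sqrt (real n) / real n"
      using cf_bound[OF gr] by blast
    have "b \<longlonglongrightarrow> 0"
    proof (rule Lim_null_comparison[of _ "\<lambda>n. C * (sqrt (real n) / real n)"])
      show "\<forall>\<^sub>F n in sequentially. norm (b n) \<le> C * (sqrt (real n) / real n)"
        using eventually_ge_at_top[of 1]
      proof eventually_elim
        case (elim n)
        then show ?case using C(2) by (auto simp: b_def divide_right_mono)
      qed
      have "(\<lambda>n. sqrt (real n) / real n) \<longlonglongrightarrow> 0" by real_asymp
      then show "(\<lambda>n. C * (sqrt (real n) / real n)) \<longlonglongrightarrow> 0" by (rule tendsto_mult_right_zero)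
    qed
    moreover have "summable (\<lambda>n. \<bar>b (Suc n) - b n\<bar>)"
    proof (rule summable_comparison_test'[where N = 1])
      show "summable (\<lambda>n. (C1 + C) * (sqrt (real n) / real n ^ 2))"
        by (intro summable_mult summable_sqrt_div_sq)
      fix n :: nat assume n: "1 \<le> n"
      have np: "real n > 0" using n by simp
      have "b (Suc n) - b n = (rpart r n + cf r n) / (real n + 1) - rpart r n / real n"
        unfolding b_def rpart_Suc'[OF gr] by simp
      also have "\<dots> = cf r n / (real n + 1) - rpart r n / (real n * (real n + 1))"
        using np by (simp add: divide_simps) (simp add: algebra_simps)
      finally have "b (Suc n) - b n = cf r n / (real n + 1) - rpart r n / (real n * (real n + 1))" .
      moreover have "\<bar>cf r n / (real n + 1)\<bar> \<le> C1 * (sqrt (real n) / real n ^ 2)"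
      proof -
        have "\<bar>cf r n\<bar> / (real n + 1) \<le> (C1 * sqrt (real n) / real n) / real n"
          using C1(2) n by (intro frac_le) auto
        then show ?thesis by (simp add: power2_eq_square)
      qed
      moreover have "\<bar>rpart r n / (real n * (real n + 1))\<bar> \<le> C * (sqrt (real n) / real n ^ 2)"
      proof -
        have "\<bar>rpart r n\<bar> / (real n * (real n + 1)) \<le> (C * sqrt (real n)) / (real n * real n)"
          using C(2) n by (intro frac_le) auto
        then show ?thesis by (simp add: power2_eq_square abs_mult)
      qed
      ultimately have "\<bar>b (Suc n) - b n\<bar> \<le> C1 * (sqrt (real n) / real n ^ 2) + C * (sqrt (real n) / real n ^ 2)"
      proof -
        assume e: "b (Suc n) - b n = cf r n / (real n + 1) - rpart r n / (real n * (real n + 1))"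
          and i1: "\<bar>cf r n / (real n + 1)\<bar> \<le> C1 * (sqrt (real n) / real n ^ 2)"
          and i2: "\<bar>rpart r n / (real n * (real n + 1))\<bar> \<le> C * (sqrt (real n) / real n ^ 2)"
        have "\<bar>b (Suc n) - b n\<bar> \<le> \<bar>cf r n / (real n + 1)\<bar> + \<bar>rpart r n / (real n * (real n + 1))\<bar>"
          unfolding e by (rule abs_triangle_ineq4)
        then show ?thesis using i1 i2 by linarith
      qed
      then show "norm \<bar>b (Suc n) - b n\<bar> \<le> (C1 + C) * (sqrt (real n) / real n ^ 2)"
        by (simp add: add_divide_distrib distrib_right)
    qed
    ultimately show ?thesis unfolding cfw by (rule alt_summable)
  qed
qed

lemma MPL_cw:
  assumes "adm w"
  shows "MPL (cw w) = complex_of_real (suminf (cf w))"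
proof -
  have g: "good w" "w \<noteq> []" using assms by (auto simp: adm_def)
  have "(\<lambda>M. rpart w M) \<longlonglongrightarrow> suminf (cf w)"
    unfolding rpart_sum[OF g] using summable_LIMSEQ[OF summable_cf[OF assms]] by simp
  then have "(\<lambda>M. MPL_part (cw w) M) \<longlonglongrightarrow> complex_of_real (suminf (cf w))"
    unfolding MPL_part_cw by (intro tendsto_of_real)
  then show ?thesis unfolding MPL_def by (rule limI)
qed

definition P :: "(nat \<times> real) list \<Rightarrow> real \<Rightarrow> real" where
  "P w x = (\<Sum>n. cf w n * x ^ n)"

fun inc :: "(nat \<times> real) list \<Rightarrow> (nat \<times> real) list" where
  "inc [] = []"
| "inc ((s,a)#r) = (Suc s, a) # r"

fun op1 :: "(nat \<times> real) list \<Rightarrow> (nat \<times> real) list" where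
  "op1 [] = []"
| "op1 ((s,a)#r) = (1, -1) # (s, -a) # r"

lemma good_inc: "good w \<Longrightarrow> good (inc w)"
  by (cases w rule: inc.cases) auto
lemma good_op1: "good w \<Longrightarrow> good (op1 w)"
  by (cases w rule: op1.cases) auto
lemma adm_inc: "good w \<Longrightarrow> w \<noteq> [] \<Longrightarrow> adm (inc w)"
  by (cases w rule: inc.cases) (auto simp: adm_def)
lemma adm_op1: "good w \<Longrightarrow> w \<noteq> [] \<Longrightarrow> adm (op1 w)"
  by (cases w rule: op1.cases) (auto simp: adm_def)
lemma inc_ne: "w \<noteq> [] \<Longrightarrow> inc w \<noteq> []" by (cases w rule: inc.cases) auto
lemma op1_ne: "w \<noteq> [] \<Longrightarrow> op1 w \<noteq> []" by (cases w rule: op1.cases) auto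

lemma P_summable:
  assumes "good w" "\<bar>x\<bar> < 1"
  shows "summable (\<lambda>n. cf w n * x ^ n)"
proof -
  obtain C where C: "C \<ge> 0" "\<forall>n. \<bar>cf w n\<bar> \<le> C" using cf_bounded[OF assms(1)] by blast
  show ?thesis
  proof (rule summable_comparison_test'[where N = 0])
    show "summable (\<lambda>n. C * \<bar>x\<bar> ^ n)"
      using assms(2) by (intro summable_mult summable_geometric) auto
    fix n :: nat
    show "norm (cf w n * x ^ n) \<le> C * \<bar>x\<bar> ^ n"
      using C by (simp add: abs_mult power_abs mult_right_mono)
  qed
qed

lemma P_deriv:
  assumes "good w" "\<bar>x\<bar> < 1"
  shows "DERIV (P w) x :> (\<Sum>n. diffs (cf w) n * x ^ n)"
  unfolding P_def
  by (rule termdiffs_strong'[where K = 1]) (use assms P_summable in auto)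

lemma diffs_summable:
  assumes "good w" "\<bar>x\<bar> < 1"
  shows "summable (\<lambda>n. diffs (cf w) n * x ^ n)"
  by (rule termdiff_converges[where K = 1]) (use assms P_summable in auto)

lemma P_0: "good w \<Longrightarrow> P w 0 = 0"
  unfolding P_def using cf_0 by (simp add: powser_zero)

lemma deriv_inc:
  assumes "good w" "w \<noteq> []" "\<bar>x\<bar> < 1" "x \<noteq> 0"
  shows "(\<Sum>n. diffs (cf (inc w)) n * x ^ n) = P w x / x"
proof -
  obtain s a r where w: "w = (s,a)#r" using assms(2) by (metis list.exhaust prod.collapse)
  have d: "diffs (cf (inc w)) n = cf w (Suc n)" for n
    using w by (simp add: diffs_def)
  have "(\<lambda>n. cf w n * x ^ n) sums P w x"
    unfolding P_def by (rule summable_sums[OF P_summable[OF assms(1,3)]])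
  then have "(\<lambda>n. cf w (Suc n) * x ^ Suc n) sums (P w x - cf w 0 * x ^ 0)"
    by (subst sums_Suc_iff) simp
  then have "(\<lambda>n. cf w (Suc n) * x ^ Suc n / x) sums (P w x / x)"
    using cf_0[OF assms(1)] by (intro sums_divide) simp
  moreover have "(\<lambda>n. cf w (Suc n) * x ^ Suc n / x) = (\<lambda>n. diffs (cf (inc w)) n * x ^ n)"
    using assms(4) by (simp add: d)
  ultimately show ?thesis by (simp add: sums_iff)
qed

lemma deriv_op1:
  assumes "good w" "w \<noteq> []" "\<bar>x\<bar> < 1"
  shows "(1 + x) * (\<Sum>n. diffs (cf (op1 w)) n * x ^ n) = - P w x"
proof -
  obtain s a r where w: "w = (s,a)#r" using assms(2) by (metis list.exhaust prod.collapse)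
  have s: "s \<ge> 1" and gr: "good r" and a: "a = 1 \<or> a = -1" using assms(1) w by auto
  define w' where "w' = (s, -a) # r"
  have gw': "good w'" using s gr a by (auto simp: w'_def)
  define d where "d n = (-1) ^ Suc n * rpart w' (Suc n)" for n
  have dd: "diffs (cf (op1 w)) n = d n" for n
    using w by (simp add: diffs_def d_def w'_def)
  have key: "d n + (if n = 0 then 0 else d (n - 1)) = - cf w n" for n
  proof (cases n)
    case 0 then show ?thesis using w s by (simp add: d_def w'_def)
  next
    case (Suc m)
    have "rpart w' (Suc (Suc m)) = rpart w' (Suc m) + cf w' (Suc m)"
      by (rule rpart_Suc'[OF gw'])
    then have "d (Suc m) + d m = (-1) ^ m * cf w' (Suc m)"
      by (simp add: d_def algebra_simps)
    also have "\<dots> = - cf w (Suc m)"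
      using w by (simp add: w'_def power_minus' algebra_simps)
    finally show ?thesis using Suc by simp
  qed
  have sd: "summable (\<lambda>n. d n * x ^ n)"
    using diffs_summable[OF good_op1[OF assms(1)] assms(3)] by (simp add: dd)
  define D where "D = (\<Sum>n. d n * x ^ n)"
  have s1: "(\<lambda>n. d n * x ^ n) sums D" using sd by (simp add: D_def summable_sums)
  have "(\<lambda>n. x * (d n * x ^ n)) sums (x * D)" by (rule sums_mult[OF s1])
  define f where "f = (\<lambda>n. (if n = 0 then 0 else d (n - 1)) * x ^ n)"
  have "(\<lambda>n. f (Suc n)) sums (x * D)"
    using \<open>(\<lambda>n. x * (d n * x ^ n)) sums (x * D)\<close> by (simp add: f_def algebra_simps)
  then have "f sums (x * D + f 0)" by (simp only: sums_Suc_iff)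
  then have s2: "(\<lambda>n. (if n = 0 then 0 else d (n - 1)) * x ^ n) sums (x * D)"
    unfolding f_def by simp
  have "(\<lambda>n. (d n + (if n = 0 then 0 else d (n - 1))) * x ^ n) sums (D + x * D)"
    using sums_add[OF s1 s2] by (simp add: algebra_simps)
  then have "(\<lambda>n. - (cf w n * x ^ n)) sums (D + x * D)" by (simp add: key)
  moreover have "(\<lambda>n. - (cf w n * x ^ n)) sums (- P w x)"
    unfolding P_def by (intro sums_minus summable_sums P_summable assms)
  ultimately have "D + x * D = - P w x" by (rule sums_unique2)
  then show ?thesis by (simp add: dd D_def algebra_simps)
qed

fun V :: "(rat \<times> (nat \<times> real) list) list \<Rightarrow> real \<Rightarrow> real" where
  "V [] x = 0"
| "V ((q, w) # cs) x = real_of_rat q * P w x + V cs x"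

fun step :: "(rat \<times> (nat \<times> real) list) list \<Rightarrow> (rat \<times> (nat \<times> real) list) list" where
  "step [] = []"
| "step ((q, w) # cs) = (2 * q, inc w) # (q, op1 w) # step cs"

definition okc :: "(rat \<times> (nat \<times> real) list) list \<Rightarrow> bool" where
  "okc cs \<longleftrightarrow> (\<forall>p\<in>set cs. good (snd p) \<and> snd p \<noteq> [])"

lemma okc_Cons[simp]: "okc ((q,w)#cs) \<longleftrightarrow> good w \<and> w \<noteq> [] \<and> okc cs"
  by (auto simp: okc_def)
lemma okc_Nil[simp]: "okc []" by (simp add: okc_def)
lemma okc_Cons'[simp]: "okc (p#cs) \<longleftrightarrow> good (snd p) \<and> snd p \<noteq> [] \<and> okc cs"
  by (auto simp: okc_def)
lemma V_Cons'[simp]: "V (p#cs) x = real_of_rat (fst p) * P (snd p) x + V cs x"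
  by (cases p) simp

lemma okc_step: "okc cs \<Longrightarrow> okc (step cs)"
  by (induction cs rule: step.induct) (auto simp: good_inc good_op1 inc_ne op1_ne)

lemma V_0: "okc cs \<Longrightarrow> V cs 0 = 0"
  by (induction cs) (auto simp: P_0)

lemma V_deriv_ex: "okc cs \<Longrightarrow> \<bar>x\<bar> < 1 \<Longrightarrow> \<exists>D. DERIV (V cs) x :> D"
proof (induction cs)
  case Nil then show ?case by (auto intro: DERIV_const)
next
  case (Cons p cs)
  then obtain D where D: "DERIV (V cs) x :> D" by auto
  have "DERIV (\<lambda>x. real_of_rat (fst p) * P (snd p) x + V cs x) x :>
          real_of_rat (fst p) * (\<Sum>n. diffs (cf (snd p)) n * x ^ n) + D"
    using Cons by (intro DERIV_add DERIV_cmult D P_deriv) auto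
  then show ?case by auto
qed

lemma V_step_deriv:
  assumes "okc cs" "0 < x" "x < 1"
  shows "DERIV (V (step cs)) x :> (2 / x - 1 / (1 + x)) * V cs x"
  using assms(1)
proof (induction cs rule: step.induct)
  case 1 then show ?case by simp
next
  case (2 q w cs)
  have g: "good w" "w \<noteq> []" and ok: "okc cs" using 2(2) by auto
  have ax: "\<bar>x\<bar> < 1" using assms by auto
  have d1: "DERIV (P (inc w)) x :> P w x / x"
    using P_deriv[OF good_inc[OF g(1)] ax] deriv_inc[OF g ax] assms by simp
  have e2: "(\<Sum>n. diffs (cf (op1 w)) n * x ^ n) = - P w x / (1 + x)"
    using deriv_op1[OF g ax] assms by (simp add: field_simps)
  have d2: "DERIV (P (op1 w)) x :> - P w x / (1 + x)"
    using P_deriv[OF good_op1[OF g(1)] ax] e2 by simp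
  have "DERIV (\<lambda>x. real_of_rat (2 * q) * P (inc w) x + (real_of_rat q * P (op1 w) x + V (step cs) x)) x :>
      real_of_rat (2 * q) * (P w x / x) + (real_of_rat q * (- P w x / (1 + x)) + (2 / x - 1 / (1 + x)) * V cs x)"
    by (intro DERIV_add DERIV_cmult d1 d2 2(1) ok)
  moreover have "real_of_rat (2 * q) * (P w x / x) + (real_of_rat q * (- P w x / (1 + x)) + (2 / x - 1 / (1 + x)) * V cs x)
      = (2 / x - 1 / (1 + x)) * (real_of_rat q * P w x + V cs x)"
    by (simp add: of_rat_mult divide_inverse algebra_simps)
  ultimately show ?case by simp
qed

fun comb :: "nat \<Rightarrow> (rat \<times> (nat \<times> real) list) list" where
  "comb 0 = []"
| "comb (Suc 0) = [(1/3, [(1, -1)])]"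
| "comb (Suc (Suc 0)) = [(-1, [(1, -1), (1, 1)])]"
| "comb (Suc (Suc (Suc n))) = step (comb (Suc (Suc n)))"

lemma okc_comb: "okc (comb s)"
  by (induction s rule: comb.induct) (auto simp: okc_step)

lemma abel_theorem:
  fixes c :: "nat \<Rightarrow> real"
  assumes sc: "summable c"
  shows "((\<lambda>x. \<Sum>n. c n * x ^ n) \<longlongrightarrow> suminf c) (at_left 1)"
proof -
  define A where "A = suminf c"
  define S where "S n = (\<Sum>k<Suc n. c k)" for n
  define r where "r n = S n - A" for n
  have "(\<lambda>n. \<Sum>k<n. c k) \<longlonglongrightarrow> A" unfolding A_def by (rule summable_LIMSEQ[OF sc])
  then have "(\<lambda>n. S n) \<longlonglongrightarrow> A" unfolding S_def by (rule LIMSEQ_Suc)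
  then have r0: "r \<longlonglongrightarrow> 0" unfolding r_def by (rule LIM_zero)
  then have "Bseq r" by (intro convergent_imp_Bseq convergentI)
  then obtain M where M: "M > 0" "\<And>n. norm (r n) \<le> M" by (auto elim: BseqE)
  have sr: "summable (\<lambda>n. r n * x ^ n)" if x: "0 \<le> x" "x < 1" for x
  proof (rule summable_comparison_test'[where N = 0])
    show "summable (\<lambda>n. M * x ^ n)" using x by (intro summable_mult summable_geometric) auto
    fix n :: nat show "norm (r n * x ^ n) \<le> M * x ^ n"
      using M(2)[of n] x by (simp add: abs_mult mult_right_mono)
  qed
  have rep: "(\<Sum>n. c n * x ^ n) = A + (1 - x) * (\<Sum>n. r n * x ^ n)" if x: "0 \<le> x" "x < 1" for x
  proof -
    define R where "R = (\<Sum>n. r n * x ^ n)"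
    have s1: "(\<lambda>n. r n * x ^ n) sums R" using sr[OF x] by (simp add: R_def summable_sums)
    have s2: "(\<lambda>n. A * x ^ n) sums (A * (1 / (1 - x)))"
      using x by (intro sums_mult geometric_sums) auto
    have sS: "(\<lambda>n. S n * x ^ n) sums (R + A / (1 - x))"
      using sums_add[OF s1 s2] by (simp add: r_def algebra_simps)
    define T where "T = R + A / (1 - x)"
    have "(\<lambda>n. x * (S n * x ^ n)) sums (x * T)" unfolding T_def by (rule sums_mult[OF sS])
    define f where "f = (\<lambda>n. (if n = 0 then 0 else S (n - 1)) * x ^ n)"
    have "(\<lambda>n. f (Suc n)) sums (x * T)"
      using \<open>(\<lambda>n. x * (S n * x ^ n)) sums (x * T)\<close> by (simp add: f_def algebra_simps)
    then have "f sums (x * T + f 0)" by (simp only: sums_Suc_iff)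
    then have sf: "f sums (x * T)" by (simp add: f_def)
    have "(\<lambda>n. S n * x ^ n - f n) sums (T - x * T)"
      using sums_diff[OF sS sf] by (simp add: T_def)
    moreover have "S n * x ^ n - f n = c n * x ^ n" for n
      by (cases n) (simp_all add: f_def S_def algebra_simps)
    ultimately have "(\<lambda>n. c n * x ^ n) sums (T - x * T)" by simp
    then have "(\<Sum>n. c n * x ^ n) = T - x * T" by (rule sums_unique[symmetric])
    also have "\<dots> = (1 - x) * R + (1 - x) * (A / (1 - x))" unfolding T_def by (simp only: left_diff_distrib distrib_left mult_1)
    also have "(1 - x) * (A / (1 - x)) = A" using x by simp
    also have "(1 - x) * R + A = A + (1 - x) * R" by simp
    finally show ?thesis by (simp add: R_def)
  qed
  have lim: "((\<lambda>x. (1 - x) * (\<Sum>n. r n * x ^ n)) \<longlongrightarrow> 0) (at_left (1::real))"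
  proof (rule tendstoI)
    fix e :: real assume e: "e > 0"
    obtain N where N: "\<And>n. n \<ge> N \<Longrightarrow> norm (r n - 0) < e / 2"
      using LIMSEQ_D[OF r0, of "e/2"] e by auto
    define R where "R = (\<Sum>i<N. \<bar>r i\<bar>)"
    have R0: "R \<ge> 0" unfolding R_def by (intro sum_nonneg) auto
    define d where "d = e / (2 * (R + 1))"
    have d: "d > 0" using e R0 by (simp add: d_def)
    have ev: "eventually (\<lambda>x. x \<in> {max 0 (1 - d)<..<1}) (at_left (1::real))"
      using d by (intro eventually_at_left_real) auto
    show "eventually (\<lambda>x. dist ((1 - x) * (\<Sum>n. r n * x ^ n)) 0 < e) (at_left 1)"
      using ev
    proof eventually_elim
      case (elim x)
      then have x: "0 < x" "x < 1" "1 - x < d" by auto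
      have sm: "summable (\<lambda>n. r n * x ^ n)" using sr x by auto
      have split: "(\<Sum>n. r n * x ^ n) = (\<Sum>n. r (n + N) * x ^ (n + N)) + (\<Sum>i<N. r i * x ^ i)"
        by (rule suminf_split_initial_segment[OF sm])
      have b1: "\<bar>\<Sum>i<N. r i * x ^ i\<bar> \<le> R"
      proof -
        have "\<bar>\<Sum>i<N. r i * x ^ i\<bar> \<le> (\<Sum>i<N. \<bar>r i * x ^ i\<bar>)" by (rule sum_abs)
        also have "\<dots> \<le> R" unfolding R_def
        proof (intro sum_mono)
          fix i assume "i \<in> {..<N}"
          have "\<bar>x ^ i\<bar> \<le> 1" using x by (simp add: power_le_one power_abs)
          then show "\<bar>r i * x ^ i\<bar> \<le> \<bar>r i\<bar>" by (simp add: abs_mult mult_left_le)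
        qed
        finally show ?thesis .
      qed
      have b2: "\<bar>\<Sum>n. r (n + N) * x ^ (n + N)\<bar> \<le> (e / 2) / (1 - x)"
      proof -
        have bnd: "norm (r (n + N) * x ^ (n + N)) \<le> e / 2 * x ^ n" for n
        proof -
          have "\<bar>r (n + N)\<bar> \<le> e / 2" using N[of "n + N"] by simp
          moreover have "x ^ (n + N) \<le> x ^ n" using x by (intro power_decreasing) auto
          ultimately have "\<bar>r (n + N)\<bar> * x ^ (n + N) \<le> e / 2 * x ^ n"
            using x by (intro mult_mono) auto
          then show ?thesis using x by (simp add: abs_mult)
        qed
        have sg: "summable (\<lambda>n. e / 2 * x ^ n)" using x by (intro summable_mult summable_geometric) auto
        have sn: "summable (\<lambda>n. norm (r (n + N) * x ^ (n + N)))"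
          by (rule summable_comparison_test'[OF sg]) (use bnd in auto)
        have "\<bar>\<Sum>n. r (n + N) * x ^ (n + N)\<bar> \<le> (\<Sum>n. norm (r (n + N) * x ^ (n + N)))"
          using summable_norm[OF sn] by simp
        also have "\<dots> \<le> (\<Sum>n. e / 2 * x ^ n)" by (rule suminf_le[OF bnd sn sg])
        also have "\<dots> = e / 2 * (\<Sum>n. x ^ n)"
          by (rule suminf_mult) (rule summable_geometric, use x in simp)
        also have "(\<Sum>n. x ^ n) = 1 / (1 - x)"
          by (rule suminf_geometric) (use x in simp)
        also have "e / 2 * (1 / (1 - x)) = (e / 2) / (1 - x)" by simp
        finally show ?thesis .
      qed
      have "\<bar>\<Sum>n. r n * x ^ n\<bar> \<le> R + (e / 2) / (1 - x)" using split b1 b2 by linarith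
      then have "(1 - x) * \<bar>\<Sum>n. r n * x ^ n\<bar> \<le> (1 - x) * (R + (e / 2) / (1 - x))"
        using x by (intro mult_left_mono) auto
      also have "\<dots> = (1 - x) * R + (1 - x) * ((e / 2) / (1 - x))" by (rule distrib_left)
      also have "(1 - x) * ((e / 2) / (1 - x)) = e / 2"
      proof -
        have gen: "z \<noteq> 0 \<Longrightarrow> z * (y / z) = y" for z y :: real by simp
        show ?thesis using x by (intro gen) simp
      qed
      also have "(1 - x) * R \<le> d * R" using x R0 by (intro mult_right_mono) auto
      also have "d * R < e / 2"
      proof -
        have "d * R = (e / 2) * (R / (R + 1))" by (simp add: d_def)
        moreover have "R / (R + 1) < 1" using R0 by simp
        moreover have "(e / 2) * (R / (R + 1)) < (e / 2) * 1"
          using \<open>R / (R + 1) < 1\<close> e by (intro mult_strict_left_mono) auto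
        ultimately show ?thesis by simp
      qed
      finally have "(1 - x) * \<bar>\<Sum>n. r n * x ^ n\<bar> < e" by simp
      then show ?case using x by (simp add: dist_real_def abs_mult)
    qed
  qed
  have "((\<lambda>x. A + (1 - x) * (\<Sum>n. r n * x ^ n)) \<longlongrightarrow> A + 0) (at_left (1::real))"
    by (intro tendsto_add tendsto_const lim)
  then have l2: "((\<lambda>x. A + (1 - x) * (\<Sum>n. r n * x ^ n)) \<longlongrightarrow> A) (at_left (1::real))"
    by simp
  have "eventually (\<lambda>x. A + (1 - x) * (\<Sum>n. r n * x ^ n) = (\<Sum>n. c n * x ^ n)) (at_left (1::real))"
  proof -
    have ev0: "eventually (\<lambda>x. x \<in> {0<..<1}) (at_left (1::real))"
      by (rule eventually_at_left_real) simp
    show ?thesis by (rule eventually_mono[OF ev0]) (use rep in auto)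
  qed
  then show ?thesis using l2 unfolding A_def by (rule Lim_transform_eventually[rotated])
qed

lemma central_binom_rec:
  "(n + 1) * ((2 * n + 2) choose (n + 1)) = 2 * (2 * n + 1) * ((2 * n) choose n)"
proof -
  have a: "Suc n * (Suc (2 * n + 1) choose Suc n) = Suc (2 * n + 1) * ((2 * n + 1) choose n)"
    by (rule Suc_times_binomial)
  have b: "Suc n * (Suc (2 * n) choose Suc n) = Suc (2 * n) * ((2 * n) choose n)"
    by (rule Suc_times_binomial)
  have c: "(2 * n + 1) choose n = (2 * n + 1) choose (Suc n)"
    using binomial_symmetric[of n "2 * n + 1"] by simp
  have "(n + 1) * ((2 * n + 2) choose (n + 1)) = (2 * n + 2) * ((2 * n + 1) choose n)"
    using a by simp
  also have "\<dots> = 2 * (Suc n * ((2 * n + 1) choose Suc n))" using c by simp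
  also have "\<dots> = 2 * (2 * n + 1) * ((2 * n) choose n)" using b by simp
  finally show ?thesis .
qed

definition beta :: "nat \<Rightarrow> nat \<Rightarrow> real" where
  "beta s n = 1 / (real n ^ s * real ((2 * n) choose n))"

definition h :: "nat \<Rightarrow> real \<Rightarrow> real" where
  "h s u = (\<Sum>n. beta s n * u ^ n)"

definition uu :: "real \<Rightarrow> real" where
  "uu x = - (x ^ 2) / (1 + x)"

definition G :: "nat \<Rightarrow> real \<Rightarrow> real" where
  "G s x = h s (uu x)"

lemma beta_bound: "\<bar>beta s n\<bar> \<le> 1"
proof (cases "n = 0")
  case True then show ?thesis by (cases s) (auto simp: beta_def)
next
  case False
  have "real n ^ s \<ge> 1" using False by simp
  moreover have "real ((2 * n) choose n) \<ge> 1"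
    using zero_less_binomial[of n "2 * n"] by (simp del: zero_less_binomial_iff)
  ultimately have "real n ^ s * real ((2 * n) choose n) \<ge> 1"
    by (metis mult_mono' mult_1 zero_le_one)
  then show ?thesis by (simp add: beta_def)
qed

lemma beta_0: "s \<ge> 1 \<Longrightarrow> beta s 0 = 0"
  by (simp add: beta_def)

lemma h_summable: "\<bar>u\<bar> < 1 \<Longrightarrow> summable (\<lambda>n. beta s n * u ^ n)"
proof (rule summable_comparison_test'[where N = 0])
  assume u: "\<bar>u\<bar> < 1"
  show "summable (\<lambda>n. \<bar>u\<bar> ^ n)" using u by (intro summable_geometric) auto
  fix n :: nat
  show "norm (beta s n * u ^ n) \<le> \<bar>u\<bar> ^ n"
    using beta_bound[of s n] by (simp add: abs_mult power_abs mult_left_le_one_le)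
qed

lemma h_deriv: "\<bar>u\<bar> < 1 \<Longrightarrow> DERIV (h s) u :> (\<Sum>n. diffs (beta s) n * u ^ n)"
  unfolding h_def by (rule termdiffs_strong'[where K = 1]) (use h_summable in auto)

lemma h_diffs_summable: "\<bar>u\<bar> < 1 \<Longrightarrow> summable (\<lambda>n. diffs (beta s) n * u ^ n)"
  by (rule termdiff_converges[where K = 1]) (use h_summable in auto)

lemma diffs_beta: "diffs (beta (Suc s)) n = beta s (Suc n)"
  by (simp add: diffs_def beta_def)

lemma h_0: "s \<ge> 1 \<Longrightarrow> h s 0 = 0"
  unfolding h_def by (simp add: powser_zero beta_0)

lemma h_deriv_val:
  assumes "s \<ge> 1" "\<bar>u\<bar> < 1" "u \<noteq> 0"
  shows "(\<Sum>n. diffs (beta (Suc s)) n * u ^ n) = h s u / u"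
proof -
  have "(\<lambda>n. beta s n * u ^ n) sums h s u" unfolding h_def by (rule summable_sums[OF h_summable[OF assms(2)]])
  then have "(\<lambda>n. beta s (Suc n) * u ^ Suc n) sums (h s u - beta s 0 * u ^ 0)"
    by (subst sums_Suc_iff) simp
  then have "(\<lambda>n. beta s (Suc n) * u ^ Suc n / u) sums (h s u / u)"
    using beta_0[OF assms(1)] by (intro sums_divide) simp
  moreover have "(\<lambda>n. beta s (Suc n) * u ^ Suc n / u) = (\<lambda>n. diffs (beta (Suc s)) n * u ^ n)"
    using assms(3) by (simp add: diffs_beta)
  ultimately show ?thesis by (simp add: sums_iff)
qed

lemma uu_deriv: "x \<noteq> -1 \<Longrightarrow> DERIV uu x :> - (x * (2 + x)) / (1 + x) ^ 2"
proof -
  assume x: "x \<noteq> -1"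
  have nz: "1 + x \<noteq> 0" using x by (metis add.commute add_eq_0_iff)
  have "DERIV (\<lambda>x. - (x ^ 2) / (1 + x)) x :> ((- (2 * x)) * (1 + x) - (- (x ^ 2)) * 1) / ((1 + x) * (1 + x))"
    by (intro DERIV_divide derivative_intros nz) (auto intro!: derivative_eq_intros)
  moreover have "((- (2 * x)) * (1 + x) - (- (x ^ 2)) * 1) / ((1 + x) * (1 + x)) = - (x * (2 + x)) / (1 + x) ^ 2"
    by (simp add: power2_eq_square algebra_simps)
  ultimately show ?thesis unfolding uu_def by simp
qed

lemma uu_range: "0 \<le> x \<Longrightarrow> x \<le> 1 \<Longrightarrow> \<bar>uu x\<bar> < 1"
proof -
  assume x: "0 \<le> x" "x \<le> 1"
  have "x ^ 2 \<le> x" using x by (simp add: power2_eq_square mult_left_le_one_le)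
  then have "x ^ 2 / (1 + x) < 1" using x by (simp add: divide_less_eq)
  then show ?thesis using x by (simp add: uu_def)
qed

lemma G_deriv_general:
  assumes "0 \<le> x" "x \<le> 1"
  shows "DERIV (G s) x :> (\<Sum>n. diffs (beta s) n * uu x ^ n) * (- (x * (2 + x)) / (1 + x) ^ 2)"
proof -
  have "DERIV (\<lambda>x. h s (uu x)) x :> (\<Sum>n. diffs (beta s) n * uu x ^ n) * (- (x * (2 + x)) / (1 + x) ^ 2)"
    by (rule DERIV_chain2[OF h_deriv[OF uu_range[OF assms]] uu_deriv]) (use assms in auto)
  then show ?thesis unfolding G_def[abs_def] .
qed

lemma G_cont: "0 \<le> x \<Longrightarrow> x \<le> 1 \<Longrightarrow> isCont (G s) x"
  using G_deriv_general DERIV_isCont by blast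

lemma G_0: "s \<ge> 1 \<Longrightarrow> G s 0 = 0"
  by (simp add: G_def uu_def h_0)

lemma G_deriv:
  assumes "s \<ge> 1" "0 < x" "x < 1"
  shows "DERIV (G (Suc s)) x :> (2 / x - 1 / (1 + x)) * G s x"
proof -
  have u: "uu x \<noteq> 0" using assms by (simp add: uu_def)
  have D: "DERIV (G (Suc s)) x :> h s (uu x) / uu x * (- (x * (2 + x)) / (1 + x) ^ 2)"
    using G_deriv_general[of x "Suc s"] h_deriv_val[OF assms(1) uu_range u] assms by simp
  have alg: "H / (- (x ^ 2) / (1 + x)) * (- (x * (2 + x)) / (1 + x) ^ 2) = (2 / x - 1 / (1 + x)) * H" for H
  proof -
    have x0: "x \<noteq> 0" and x1: "1 + x \<noteq> 0" using assms by auto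
    have "H / (- (x ^ 2) / (1 + x)) * (- (x * (2 + x)) / (1 + x) ^ 2) = H * (2 + x) / (x * (1 + x))"
      using x0 x1 by (simp add: power2_eq_square)
    also have "\<dots> = (2 / x - 1 / (1 + x)) * H"
      using x0 x1 by (simp add: diff_divide_distrib divide_simps)
    finally show ?thesis .
  qed
  have "h s (uu x) / uu x * (- (x * (2 + x)) / (1 + x) ^ 2) = (2 / x - 1 / (1 + x)) * h s (uu x)"
    unfolding uu_def[of x] by (rule alg)
  then show ?thesis using D by (simp add: G_def)
qed

lemma sums_shift1:
  fixes g :: "nat \<Rightarrow> real"
  assumes "(\<lambda>n. g n * u ^ n) sums S"
  shows "(\<lambda>n. (if n = 0 then 0 else g (n - 1)) * u ^ n) sums (u * S)"
proof -
  define f where "f = (\<lambda>n. (if n = 0 then 0 else g (n - 1)) * u ^ n)"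
  have "(\<lambda>n. u * (g n * u ^ n)) sums (u * S)" by (rule sums_mult[OF assms])
  then have "(\<lambda>n. f (Suc n)) sums (u * S)" by (simp add: f_def algebra_simps)
  then have "f sums (u * S + f 0)" by (simp only: sums_Suc_iff)
  then show ?thesis unfolding f_def by simp
qed

lemma coef_identity:
  fixes m :: nat
  shows "4 * beta 0 (Suc (Suc m)) - beta 0 (Suc m) - 2 * beta 1 (Suc (Suc m)) = 0"
proof -
  define X where "X = real ((2 * Suc (Suc m)) choose Suc (Suc m))"
  define Y where "Y = real ((2 * Suc m) choose Suc m)"
  have "0 < (2 * Suc (Suc m)) choose Suc (Suc m)" by (rule zero_less_binomial) simp
  then have X0: "X > 0" unfolding X_def by (simp only: of_nat_0_less_iff)
  have "0 < (2 * Suc m) choose Suc m" by (rule zero_less_binomial) simp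
  then have Y0: "Y > 0" unfolding Y_def by (simp only: of_nat_0_less_iff)
  have e1: "2 * Suc m + 2 = 2 * Suc (Suc m)" and e2: "Suc m + 1 = Suc (Suc m)" by simp_all
  have "Suc (Suc m) * ((2 * Suc (Suc m)) choose Suc (Suc m)) = 2 * (2 * Suc m + 1) * ((2 * Suc m) choose Suc m)"
    using central_binom_rec[of "Suc m"] unfolding e1 e2 .
  then have "real (Suc (Suc m)) * X = real (2 * (2 * Suc m + 1)) * Y"
    unfolding X_def Y_def by (metis of_nat_mult)
  moreover have "real (Suc (Suc m)) = real m + 2" "real (2 * (2 * Suc m + 1)) = 2 * (2 * real m + 3)"
    by simp_all
  ultimately have rel: "(real m + 2) * X = 2 * (2 * real m + 3) * Y" by (simp add: add.commute)
  have b1: "beta 0 (Suc (Suc m)) = 1 / X" unfolding beta_def X_def by simp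
  have b2: "beta 0 (Suc m) = 1 / Y" unfolding beta_def Y_def by simp
  have b3: "beta 1 (Suc (Suc m)) = 1 / ((real m + 2) * X)"
    unfolding beta_def X_def by (simp add: algebra_simps)
  have "4 / X - 1 / Y - 2 * (1 / ((real m + 2) * X)) = (4 * (real m + 2) - 2) / ((real m + 2) * X) - 1 / Y"
  proof -
    have m2: "real m + 2 > 0" by simp
    have "(real m + 2) * X > 0" using X0 m2 by simp
    then show ?thesis using X0 m2 by (simp add: divide_simps) (simp add: algebra_simps)
  qed
  also have "\<dots> = (4 * (real m + 2) - 2) / (2 * (2 * real m + 3) * Y) - 1 / Y" by (simp add: rel)
  also have "\<dots> = 0"
  proof -
    have "2 * (2 * real m + 3) * Y > 0" using Y0 by simp
    then show ?thesis using Y0 by (simp add: divide_simps)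
  qed
  finally show ?thesis unfolding b1 b2 b3 by simp
qed

lemma h1_ode:
  assumes u: "\<bar>u\<bar> < 1"
  shows "(4 * u - u ^ 2) * (\<Sum>n. diffs (beta 1) n * u ^ n) - 2 * h 1 u = u"
proof -
  define E where "E = (\<Sum>n. diffs (beta 1) n * u ^ n)"
  define e where "e = diffs (beta 1)"
  have s0: "(\<lambda>n. e n * u ^ n) sums E" unfolding E_def e_def using h_diffs_summable[OF u] by (simp add: summable_sums)
  define g1 where "g1 = (\<lambda>n. if n = 0 then 0 else e (n - 1))"
  have s1: "(\<lambda>n. g1 n * u ^ n) sums (u * E)" unfolding g1_def by (rule sums_shift1[OF s0])
  define g2 where "g2 = (\<lambda>n. if n = 0 then 0 else g1 (n - 1))"
  have s2: "(\<lambda>n. g2 n * u ^ n) sums (u * (u * E))" unfolding g2_def by (rule sums_shift1[OF s1])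
  have sh: "(\<lambda>n. beta 1 n * u ^ n) sums h 1 u" unfolding h_def using h_summable[OF u] by (simp add: summable_sums)
  have comb: "(\<lambda>n. 4 * (g1 n * u ^ n) - g2 n * u ^ n - 2 * (beta 1 n * u ^ n)) sums (4 * (u * E) - u * (u * E) - 2 * h 1 u)"
    by (intro sums_diff sums_mult s1 s2 sh)
  have ed: "e n = beta 0 (Suc n)" for n unfolding e_def using diffs_beta[of 0 n] by simp
  have coef: "4 * (g1 n * u ^ n) - g2 n * u ^ n - 2 * (beta 1 n * u ^ n) = (if n = 1 then u ^ n else 0)" for n
  proof (cases n)
    case 0 then show ?thesis by (simp add: g1_def g2_def beta_def)
  next
    case (Suc k)
    show ?thesis
    proof (cases k)
      case 0
      then show ?thesis using Suc by (simp add: g1_def g2_def ed beta_def)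
    next
      case (Suc m)
      have "4 * g1 n - g2 n - 2 * beta 1 n = 0"
        using coef_identity[of m] \<open>n = Suc k\<close> Suc by (simp add: g1_def g2_def ed)
      then have "(4 * g1 n - g2 n - 2 * beta 1 n) * u ^ n = 0" by simp
      then show ?thesis using \<open>n = Suc k\<close> Suc by (simp add: algebra_simps)
    qed
  qed
  have "(\<lambda>n. if n = 1 then u ^ n else 0) sums (4 * (u * E) - u * (u * E) - 2 * h 1 u)"
    using comb by (simp only: coef)
  moreover have "(\<lambda>n. if n = 1 then u ^ n else 0) sums (u ^ 1)" by (rule sums_single)
  ultimately have "4 * (u * E) - u * (u * E) - 2 * h 1 u = u" using sums_unique2 by force
  then show ?thesis unfolding E_def[symmetric] by (simp add: power2_eq_square algebra_simps)
qed

definition K :: "real \<Rightarrow> real" where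
  "K x = - (x * ln (1 + x)) / (2 + x)"

definition K' :: "real \<Rightarrow> real" where
  "K' x = - ((ln (1 + x) + x / (1 + x)) * (2 + x) - x * ln (1 + x)) / (2 + x) ^ 2"

lemma K_deriv:
  assumes "x > -1"
  shows "DERIV K x :> K' x"
proof -
  have p: "1 + x > 0" "2 + x > 0" using assms by auto
  have dl: "DERIV (\<lambda>x. ln (1 + x)) x :> 1 / (1 + x) * 1"
    by (rule DERIV_chain2[OF DERIV_ln_divide]) (use p in \<open>auto intro!: derivative_eq_intros\<close>)
  have d1': "DERIV (\<lambda>x. x * ln (1 + x)) x :> x * (1 / (1 + x) * 1) + 1 * ln (1 + x)"
    by (rule DERIV_mult'[OF DERIV_ident dl])
  have d1: "DERIV (\<lambda>x. x * ln (1 + x)) x :> 1 * ln (1 + x) + x * (1 / (1 + x))"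
    using d1' by (simp add: algebra_simps)
  have d2: "DERIV (\<lambda>x. - (x * ln (1 + x))) x :> - (1 * ln (1 + x) + x * (1 / (1 + x)))"
    by (rule DERIV_minus[OF d1])
  have d3: "DERIV (\<lambda>x. 2 + x) x :> 1" by (auto intro!: derivative_eq_intros)
  have "DERIV (\<lambda>x. - (x * ln (1 + x)) / (2 + x)) x :>
     ((- (1 * ln (1 + x) + x * (1 / (1 + x)))) * (2 + x) - (- (x * ln (1 + x))) * 1) / ((2 + x) * (2 + x))"
    by (rule DERIV_divide[OF d2 d3]) (use p in simp)
  moreover have "((- (1 * ln (1 + x) + x * (1 / (1 + x)))) * (2 + x) - (- (x * ln (1 + x))) * 1) / ((2 + x) * (2 + x)) = K' x"
    unfolding K'_def by (simp add: power2_eq_square algebra_simps)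
  ultimately show ?thesis unfolding K_def[abs_def] by simp
qed

lemma K_ode_alg:
  fixes x L a b :: real
  assumes "a \<noteq> 0" "b \<noteq> 0" "a = 1 + x" "b = 2 + x"
  shows "x * b * (- ((L + x / a) * b - x * L) / b ^ 2) = 2 * (- (x * L) / b) + - (x ^ 2) / a"
proof -
  have l: "x * b * (- ((L + x / a) * b - x * L) / b ^ 2) = - (x * ((L * a + x) * b - x * L * a)) / (a * b)"
    using assms(1,2) by (simp add: field_simps power2_eq_square)
  have r: "2 * (- (x * L) / b) + - (x ^ 2) / a = (- 2 * x * L * a - x ^ 2 * b) / (a * b)"
    using assms(1,2) by (simp add: field_simps power2_eq_square)
  have n: "- (x * ((L * a + x) * b - x * L * a)) = - 2 * x * L * a - x ^ 2 * b"
    unfolding assms(3,4) by (simp add: algebra_simps power2_eq_square)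
  show ?thesis unfolding l r n ..
qed

lemma K_ode:
  assumes "x \<ge> 0"
  shows "x * (2 + x) * K' x = 2 * K x + uu x"
  unfolding K'_def K_def uu_def
  by (rule K_ode_alg[of "1 + x" "2 + x"]) (use assms in auto)

definition G1' :: "real \<Rightarrow> real" where
  "G1' x = (\<Sum>n. diffs (beta 1) n * uu x ^ n) * (- (x * (2 + x)) / (1 + x) ^ 2)"

lemma G1_deriv: "0 \<le> x \<Longrightarrow> x \<le> 1 \<Longrightarrow> DERIV (G 1) x :> G1' x"
  unfolding G1'_def by (rule G_deriv_general)

lemma G1_ode:
  assumes "0 \<le> x" "x \<le> 1"
  shows "x * (2 + x) * G1' x = 2 * G 1 x + uu x"
proof -
  define u where "u = uu x"
  define H where "H = (\<Sum>n. diffs (beta 1) n * u ^ n)"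
  have ode: "(4 * u - u ^ 2) * H - 2 * h 1 u = u"
    unfolding H_def u_def by (rule h1_ode[OF uu_range[OF assms]])
  have p: "1 + x > 0" using assms by auto
  have alg0: "a \<noteq> 0 \<Longrightarrow> a = 1 + x \<Longrightarrow> x * (2 + x) * (- (x * (2 + x)) / a ^ 2) = 4 * (- (x ^ 2) / a) - (- (x ^ 2) / a) ^ 2" for a
  proof -
    assume a: "a \<noteq> 0" "a = 1 + x"
    have "x * (2 + x) * (- (x * (2 + x)) / a ^ 2) - (4 * (- (x ^ 2) / a) - (- (x ^ 2) / a) ^ 2)
        = (- (x * (2 + x)) * (x * (2 + x)) + 4 * x ^ 2 * a + x ^ 4) / a ^ 2"
      using a(1) by (simp add: field_simps power2_eq_square power4_eq_xxxx)
    also have "- (x * (2 + x)) * (x * (2 + x)) + 4 * x ^ 2 * a + x ^ 4 = 0"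
      unfolding a(2) by (simp add: algebra_simps power2_eq_square power4_eq_xxxx)
    finally show ?thesis by simp
  qed
  have alg: "x * (2 + x) * (- (x * (2 + x)) / (1 + x) ^ 2) = 4 * u - u ^ 2"
    unfolding u_def uu_def by (rule alg0) (use p in auto)
  have "x * (2 + x) * G1' x = (x * (2 + x) * (- (x * (2 + x)) / (1 + x) ^ 2)) * H"
    unfolding G1'_def H_def u_def by (simp add: algebra_simps)
  also have "\<dots> = (4 * u - u ^ 2) * H" by (simp only: alg)
  also have "\<dots> = 2 * h 1 u + u" using ode by simp
  finally show ?thesis by (simp add: G_def u_def)
qed

lemma G1_eq_K:
  assumes "0 \<le> x" "x < 1"
  shows "G 1 x = K x"
proof -
  define D where "D y = G 1 y - K y" for y
  define D' where "D' y = G1' y - K' y" for y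
  have Dd: "DERIV D y :> D' y" if "0 \<le> y" "y \<le> 1" for y
    unfolding D_def[abs_def] D'_def using G1_deriv[OF that] K_deriv[of y] that
    by (intro DERIV_diff) auto
  have Dode: "y * (2 + y) * D' y = 2 * D y" if "0 \<le> y" "y \<le> 1" for y
    using G1_ode[OF that] K_ode[of y] that unfolding D_def D'_def by (simp add: algebra_simps)
  have D0: "D 0 = 0" unfolding D_def using G_0[of 1] by (simp add: K_def)
  have D'0: "D' 0 = 0" unfolding D'_def G1'_def K'_def by simp
  define E where "E y = D y * (2 + y) / y" for y
  have Ed: "DERIV E y :> 0" if "y \<in> {0<..<1}" for y
  proof -
    have y: "0 < y" "y < 1" using that by auto
    have d2: "DERIV (\<lambda>y. 2 + y) y :> 1" by (auto intro!: derivative_eq_intros)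
    have "DERIV (\<lambda>y. D y * (2 + y)) y :> D' y * (2 + y) + 1 * D y"
      by (rule DERIV_mult[OF Dd d2]) (use y in auto)
    then have "DERIV (\<lambda>y. D y * (2 + y) / y) y :> ((D' y * (2 + y) + 1 * D y) * y - D y * (2 + y) * 1) / (y * y)"
      by (rule DERIV_divide[OF _ DERIV_ident]) (use y in auto)
    moreover have "(D' y * (2 + y) + 1 * D y) * y - D y * (2 + y) * 1 = y * (2 + y) * D' y - 2 * D y"
      by (simp add: algebra_simps)
    ultimately show ?thesis using Dode[of y] y unfolding E_def[abs_def] by simp
  qed
  have Econst: "E y = E (1/2)" if "y \<in> {0<..<1}" for y
    by (rule DERIV_isconst3[of 0 1]) (use that Ed in auto)
  have "((\<lambda>y. (D y - D 0) / (y - 0)) \<longlongrightarrow> D' 0) (at 0)"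
    using Dd[of 0] by (simp add: has_field_derivative_iff)
  then have "((\<lambda>y. (D y - D 0) / (y - 0)) \<longlongrightarrow> D' 0) (at_right 0)"
    by (rule tendsto_within_subset) simp
  then have "((\<lambda>y. D y / y) \<longlongrightarrow> 0) (at_right 0)"
    using D0 D'0 by simp
  then have "((\<lambda>y. D y / y * (2 + y)) \<longlongrightarrow> 0 * (2 + 0)) (at_right 0)"
    by (intro tendsto_mult tendsto_add tendsto_const) (auto intro: tendsto_ident_at)
  moreover have "(\<lambda>y. D y / y * (2 + y)) = E" by (rule ext) (simp add: E_def)
  ultimately have Elim: "(E \<longlongrightarrow> 0) (at_right 0)" by simp
  have "eventually (\<lambda>y. E (1/2) = E y) (at_right (0::real))"
  proof -
    have "eventually (\<lambda>y. y \<in> {0<..<1}) (at_right (0::real))"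
      by (rule eventually_at_right_real) simp
    then show ?thesis by (rule eventually_mono) (erule Econst[symmetric])
  qed
  then have "(E \<longlongrightarrow> E (1/2)) (at_right 0)"
    by (rule Lim_transform_eventually[OF tendsto_const])
  then have E0: "E (1/2) = 0" using Elim by (intro tendsto_unique[OF trivial_limit_at_right_real])
  show ?thesis
  proof (cases "x = 0")
    case True then show ?thesis using D0 by (simp add: D_def)
  next
    case False
    then have x: "x \<in> {0<..<1}" using assms by auto
    then have "E x = 0" using Econst[OF x] E0 by simp
    then have "D x = 0" using x by (simp add: E_def)
    then show ?thesis by (simp add: D_def)
  qed
qed

lemma P_ln:
  assumes "0 \<le> x" "x < 1"
  shows "P [(1, -1)] x = - ln (1 + x)"
proof -
  let ?w = "[(1::nat, -1::real)]"
  have g: "good ?w" by simp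
  have ax: "\<bar>x\<bar> < 1" using assms by simp
  have "(\<lambda>n. cf ?w n * x ^ n) sums P ?w x"
    unfolding P_def by (rule summable_sums[OF P_summable[OF g ax]])
  then have "(\<lambda>n. cf ?w (Suc n) * x ^ Suc n) sums (P ?w x - cf ?w 0 * x ^ 0)"
    by (subst sums_Suc_iff) simp
  then have "(\<lambda>n. cf ?w (Suc n) * x ^ Suc n) sums (P ?w x)" by simp
  then have "(\<lambda>n. - (cf ?w (Suc n) * x ^ Suc n)) sums (- P ?w x)" by (rule sums_minus)
  moreover have "(\<lambda>n. - (cf ?w (Suc n) * x ^ Suc n)) = (\<lambda>n. (-1) ^ n * (1 / real (n + 1)) * (1 + x - 1) ^ Suc n)"
    by (rule ext) (simp add: field_simps)
  ultimately have "(\<lambda>n. (-1) ^ n * (1 / real (n + 1)) * (1 + x - 1) ^ Suc n) sums (- P ?w x)" by simp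
  then have "(\<Sum>n. (-1) ^ n * (1 / real (n + 1)) * (1 + x - 1) ^ Suc n) = - P ?w x" by (rule sums_unique[symmetric])
  moreover have "ln (1 + x) = (\<Sum>n. (-1) ^ n * (1 / real (n + 1)) * (1 + x - 1) ^ Suc n)"
    by (rule ln_series) (use assms in auto)
  ultimately show ?thesis by simp
qed

lemma eq_by_deriv:
  fixes f g :: "real \<Rightarrow> real"
  assumes df: "\<And>x. 0 \<le> x \<Longrightarrow> x < 1 \<Longrightarrow> \<exists>d. DERIV f x :> d"
    and dg: "\<And>x. 0 \<le> x \<Longrightarrow> x < 1 \<Longrightarrow> \<exists>d. DERIV g x :> d"
    and dfg: "\<And>x. 0 < x \<Longrightarrow> x < 1 \<Longrightarrow> \<exists>d. DERIV f x :> d \<and> DERIV g x :> d"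
    and f0: "f 0 = g 0" and x: "0 \<le> x" "x < 1"
  shows "f x = g x"
proof (cases "x = 0")
  case True then show ?thesis using f0 by simp
next
  case False
  then have x0: "0 < x" using x by simp
  have "(\<lambda>y. f y - g y) x = (\<lambda>y. f y - g y) 0"
  proof (rule DERIV_isconst2[OF x0])
    have "isCont (\<lambda>y. f y - g y) y" if hy: "y \<in> {0..x}" for y
    proof -
      obtain d1 where "DERIV f y :> d1" using df hy x by fastforce
      moreover obtain d2 where "DERIV g y :> d2" using dg hy x by fastforce
      ultimately show ?thesis by (intro isCont_diff) (auto dest: DERIV_isCont)
    qed
    then show "continuous_on {0..x} (\<lambda>y. f y - g y)" by (intro continuous_at_imp_continuous_on) auto
  next
    fix y assume y: "0 < y" "y < x"
    obtain d where "DERIV f y :> d" "DERIV g y :> d" using dfg[of y] y x by auto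
    then have "DERIV (\<lambda>y. f y - g y) y :> d - d" by (intro DERIV_diff)
    then show "DERIV (\<lambda>y. f y - g y) y :> 0" by simp
  qed (use x0 in auto)
  then show ?thesis using f0 by simp
qed

lemma step_alg:
  fixes x :: real
  assumes "x > 0"
  shows "(2 / x - 1 / (1 + x)) * (- (x * ln (1 + x)) / (2 + x)) = - ln (1 + x) / (1 + x)"
proof -
  have gen: "a \<noteq> 0 \<Longrightarrow> b \<noteq> 0 \<Longrightarrow> a = 1 + x \<Longrightarrow> b = 2 + x \<Longrightarrow>
      (2 / x - 1 / a) * (- (x * L) / b) = - L / a" for a b L :: real
  proof -
    assume h: "a \<noteq> 0" "b \<noteq> 0" "a = 1 + x" "b = 2 + x"
    have "(2 / x - 1 / a) * (- (x * L) / b) = - ((2 * a - x) * L) / (a * b)"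
      using h(1,2) assms by (simp add: field_simps)
    also have "2 * a - x = b" using h by simp
    also have "- (b * L) / (a * b) = - L / a" using h(1,2) by simp
    finally show ?thesis .
  qed
  show ?thesis by (rule gen) (use assms in auto)
qed

lemma comb_Suc: "n \<ge> 2 \<Longrightarrow> comb (Suc n) = step (comb n)"
proof -
  assume "n \<ge> 2"
  then obtain k where "n = Suc (Suc k)" by (metis add_2_eq_Suc le_Suc_ex)
  then show ?thesis by simp
qed

lemma main_eq:
  assumes "s \<ge> 2" "0 \<le> x" "x < 1"
  shows "G s x = V (comb s) x"
  using assms(1) assms(2,3)
proof (induction s arbitrary: x rule: nat_induct_at_least)
  case base
  let ?w = "[(1::nat, -1::real)]"
  have cw: "comb 2 = [(-1, op1 ?w)]" by (simp add: numeral_2_eq_2)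
  have ok: "okc (comb 2)" by (rule okc_comb)
  show ?case
  proof (rule eq_by_deriv[OF _ _ _ _ base])
    fix y :: real assume y: "0 \<le> y" "y < 1"
    show "\<exists>d. DERIV (G 2) y :> d" using G_deriv_general[of y] y by fastforce
    show "\<exists>d. DERIV (V (comb 2)) y :> d" using V_deriv_ex[OF ok] y by simp
  next
    fix y :: real assume y: "0 < y" "y < 1"
    have g2: "DERIV (G (Suc 1)) y :> (2 / y - 1 / (1 + y)) * G 1 y"
      by (rule G_deriv) (use y in auto)
    have "G 1 y = K y" by (rule G1_eq_K) (use y in auto)
    then have g2': "DERIV (G 2) y :> - ln (1 + y) / (1 + y)"
      using g2 step_alg[of y] y by (simp add: K_def numeral_2_eq_2)
    have ay: "\<bar>y\<bar> < 1" using y by simp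
    have gw: "good ?w" "?w \<noteq> []" by auto
    have e: "(1 + y) * (\<Sum>n. diffs (cf (op1 ?w)) n * y ^ n) = - P ?w y" by (rule deriv_op1[OF gw ay])
    have "(\<Sum>n. diffs (cf (op1 ?w)) n * y ^ n) = ln (1 + y) / (1 + y)"
    proof -
      have "1 + y \<noteq> 0" using y by simp
      then show ?thesis using e P_ln[of y] y by (simp add: field_simps)
    qed
    then have dP: "DERIV (P (op1 ?w)) y :> ln (1 + y) / (1 + y)"
      using P_deriv[OF good_op1[OF gw(1)] ay] by simp
    have V2: "V (comb 2) = (\<lambda>y. real_of_rat (-1) * P (op1 ?w) y + 0)"
      by (rule ext) (simp add: cw)
    have "DERIV (V (comb 2)) y :> real_of_rat (-1) * (ln (1 + y) / (1 + y)) + 0"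
      unfolding V2 by (intro DERIV_add DERIV_cmult dP DERIV_const)
    then have "DERIV (V (comb 2)) y :> - ln (1 + y) / (1 + y)" by simp
    then show "\<exists>d. DERIV (G 2) y :> d \<and> DERIV (V (comb 2)) y :> d" using g2' by blast
  next
    show "G 2 0 = V (comb 2) 0" using G_0[of 2] V_0[OF ok] by simp
  qed
next
  case (Suc n)
  have ok: "okc (comb n)" "okc (comb (Suc n))" by (rule okc_comb)+
  have cs: "comb (Suc n) = step (comb n)" by (rule comb_Suc[OF Suc.hyps])
  show ?case
  proof (rule eq_by_deriv[OF _ _ _ _ Suc.prems])
    fix y :: real assume y: "0 \<le> y" "y < 1"
    show "\<exists>d. DERIV (G (Suc n)) y :> d" using G_deriv_general[of y] y by fastforce
    show "\<exists>d. DERIV (V (comb (Suc n))) y :> d" using V_deriv_ex[OF ok(2)] y by simp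
  next
    fix y :: real assume y: "0 < y" "y < 1"
    have "DERIV (G (Suc n)) y :> (2 / y - 1 / (1 + y)) * G n y"
      by (rule G_deriv) (use y Suc.hyps in auto)
    moreover have "G n y = V (comb n) y" by (rule Suc.IH) (use y in auto)
    moreover have "DERIV (V (comb (Suc n))) y :> (2 / y - 1 / (1 + y)) * V (comb n) y"
      unfolding cs by (rule V_step_deriv[OF ok(1) y])
    ultimately show "\<exists>d. DERIV (G (Suc n)) y :> d \<and> DERIV (V (comb (Suc n))) y :> d" by auto
  next
    show "G (Suc n) 0 = V (comb (Suc n)) 0" using G_0[of "Suc n"] V_0[OF ok(2)] by simp
  qed
qed

fun Vlim :: "(rat \<times> (nat \<times> real) list) list \<Rightarrow> real" where
  "Vlim [] = 0"
| "Vlim ((q, w) # cs) = real_of_rat q * suminf (cf w) + Vlim cs"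

definition admc :: "nat \<Rightarrow> (rat \<times> (nat \<times> real) list) list \<Rightarrow> bool" where
  "admc W cs \<longleftrightarrow> (\<forall>p\<in>set cs. adm (snd p) \<and> sum_list (map fst (snd p)) = W)"

lemma admc_Cons[simp]: "admc W ((q,w)#cs) \<longleftrightarrow> adm w \<and> sum_list (map fst w) = W \<and> admc W cs"
  by (auto simp: admc_def)
lemma admc_Nil[simp]: "admc W []" by (simp add: admc_def)

lemma adm_good: "adm w \<Longrightarrow> good w" "adm w \<Longrightarrow> w \<noteq> []"
  by (auto simp: adm_def)

lemma wt_inc: "w \<noteq> [] \<Longrightarrow> sum_list (map fst (inc w)) = Suc (sum_list (map fst w))"
  by (cases w rule: inc.cases) auto
lemma wt_op1: "w \<noteq> [] \<Longrightarrow> sum_list (map fst (op1 w)) = Suc (sum_list (map fst w))"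
  by (cases w rule: op1.cases) auto

lemma admc_step: "admc W cs \<Longrightarrow> admc (Suc W) (step cs)"
  by (induction cs rule: step.induct)
     (auto simp: adm_inc adm_op1 adm_good wt_inc wt_op1)

lemma admc_comb: "s \<ge> 1 \<Longrightarrow> admc s (comb s)"
proof (induction s rule: comb.induct)
  case 3 then show ?case by (simp add: adm_def numeral_2_eq_2)
next
  case (4 n) then show ?case by (simp add: admc_step)
qed (auto simp: adm_def)

lemma V_lim: "admc W cs \<Longrightarrow> (V cs \<longlongrightarrow> Vlim cs) (at_left 1)"
proof (induction cs)
  case Nil then show ?case by simp
next
  case (Cons p cs)
  obtain q w where p: "p = (q, w)" by force
  have a: "adm w" and c: "admc W cs" using Cons.prems p by auto
  have "((\<lambda>x. \<Sum>n. cf w n * x ^ n) \<longlongrightarrow> suminf (cf w)) (at_left 1)"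
    by (rule abel_theorem[OF summable_cf[OF a]])
  then have "(P w \<longlongrightarrow> suminf (cf w)) (at_left 1)" unfolding P_def[abs_def] .
  then have "((\<lambda>x. real_of_rat q * P w x + V cs x) \<longlongrightarrow> real_of_rat q * suminf (cf w) + Vlim cs) (at_left 1)"
    by (intro tendsto_add tendsto_mult tendsto_const Cons.IH c)
  then show ?case using p by (simp add: V.simps[abs_def])
qed

lemma at_left_lim_eq:
  fixes f g :: "real \<Rightarrow> real"
  assumes "isCont f 1" "(g \<longlongrightarrow> L) (at_left 1)" "\<And>x. 0 < x \<Longrightarrow> x < 1 \<Longrightarrow> f x = g x"
  shows "f 1 = L"
proof -
  have "(f \<longlongrightarrow> f 1) (at 1)" using assms(1) by (simp add: isCont_def)
  then have f1: "(f \<longlongrightarrow> f 1) (at_left 1)" by (rule tendsto_within_subset) simp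
  have ev: "eventually (\<lambda>x. g x = f x) (at_left (1::real))"
  proof -
    have "eventually (\<lambda>x. x \<in> {0<..<1}) (at_left (1::real))"
      by (rule eventually_at_left_real) simp
    then show ?thesis by (rule eventually_mono) (use assms(3) in force)
  qed
  have "(f \<longlongrightarrow> L) (at_left 1)" by (rule Lim_transform_eventually[OF assms(2) ev])
  then show ?thesis using f1 by (intro tendsto_unique[OF trivial_limit_at_left_real])
qed

lemma G_at_1: "s \<ge> 1 \<Longrightarrow> G s 1 = Vlim (comb s)"
proof (cases "s = 1")
  case True
  let ?w = "[(1::nat, -1::real)]"
  have aw: "adm ?w" by (simp add: adm_def)
  have cK: "isCont K 1" using K_deriv[of 1] DERIV_isCont by auto
  have "(K \<longlongrightarrow> K 1) (at 1)" using cK by (simp add: isCont_def)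
  then have Kl: "(K \<longlongrightarrow> K 1) (at_left 1)" by (rule tendsto_within_subset) simp
  have GK: "G 1 1 = K 1"
  proof (rule at_left_lim_eq[OF G_cont Kl])
    fix x :: real assume "0 < x" "x < 1"
    then show "G 1 x = K x" by (intro G1_eq_K) auto
  qed auto
  have cL: "isCont (\<lambda>x::real. - ln (1 + x)) 1" by (auto intro!: continuous_intros)
  have PL: "(P ?w \<longlongrightarrow> suminf (cf ?w)) (at_left 1)"
    using abel_theorem[OF summable_cf[OF aw]] unfolding P_def[abs_def] .
  have "(\<lambda>x::real. - ln (1 + x)) 1 = suminf (cf ?w)"
  proof (rule at_left_lim_eq[OF cL PL])
    fix x :: real assume "0 < x" "x < 1"
    then show "- ln (1 + x) = P ?w x" using P_ln[of x] by simp
  qed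
  then have S: "suminf (cf ?w) = - ln 2" by simp
  have "Vlim (comb 1) = real_of_rat (1/3) * suminf (cf ?w)" by (simp add: numeral_2_eq_2)
  also have "\<dots> = - ln 2 / 3" using S by (simp add: of_rat_divide)
  also have "\<dots> = K 1" by (simp add: K_def)
  finally show ?thesis using GK True by simp
next
  case False
  assume "s \<ge> 1"
  then have s2: "s \<ge> 2" using False by simp
  show ?thesis
  proof (rule at_left_lim_eq[OF G_cont V_lim[OF admc_comb]])
    fix x :: real assume "0 < x" "x < 1"
    then show "G s x = V (comb s) x" by (intro main_eq s2) auto
  qed (use s2 in auto)
qed

lemma cmzv_0: "0 \<in> CMZV N W"
  unfolding CMZV_def by (rule CollectI, rule exI[of _ "{}"]) auto

lemma cmzv_add:
  assumes "a \<in> CMZV N W" "b \<in> CMZV N W"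
  shows "a + b \<in> CMZV N W"
proof -
  obtain S1 c1 where 1: "finite S1" "S1 \<subseteq> CMZV_generators N W" "a = (\<Sum>g\<in>S1. of_real (of_rat (c1 g)) * g)"
    using assms(1) unfolding CMZV_def by blast
  obtain S2 c2 where 2: "finite S2" "S2 \<subseteq> CMZV_generators N W" "b = (\<Sum>g\<in>S2. of_real (of_rat (c2 g)) * g)"
    using assms(2) unfolding CMZV_def by blast
  define c where "c g = (if g \<in> S1 then c1 g else 0) + (if g \<in> S2 then c2 g else 0)" for g
  have fin: "finite (S1 \<union> S2)" using 1 2 by auto
  have "(\<Sum>g\<in>S1 \<union> S2. of_real (of_rat (c g)) * g)
      = (\<Sum>g\<in>S1 \<union> S2. (if g \<in> S1 then of_real (of_rat (c1 g)) * g else 0))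
        + (\<Sum>g\<in>S1 \<union> S2. (if g \<in> S2 then of_real (of_rat (c2 g)) * g else 0))"
    unfolding sum.distrib[symmetric] by (intro sum.cong refl) (simp add: c_def of_rat_add distrib_right)
  also have "(\<Sum>g\<in>S1 \<union> S2. (if g \<in> S1 then of_real (of_rat (c1 g)) * g else 0)) = a"
  proof -
    have "(\<Sum>g\<in>S1 \<union> S2. (if g \<in> S1 then of_real (of_rat (c1 g)) * g else 0)) = (\<Sum>g\<in>(S1 \<union> S2) \<inter> S1. of_real (of_rat (c1 g)) * g)"
      by (rule sum.inter_restrict[symmetric]) (fact fin)
    also have "(S1 \<union> S2) \<inter> S1 = S1" by blast
    finally show ?thesis using 1 by simp
  qed
  also have "(\<Sum>g\<in>S1 \<union> S2. (if g \<in> S2 then of_real (of_rat (c2 g)) * g else 0)) = b"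
  proof -
    have "(\<Sum>g\<in>S1 \<union> S2. (if g \<in> S2 then of_real (of_rat (c2 g)) * g else 0)) = (\<Sum>g\<in>(S1 \<union> S2) \<inter> S2. of_real (of_rat (c2 g)) * g)"
      by (rule sum.inter_restrict[symmetric]) (fact fin)
    also have "(S1 \<union> S2) \<inter> S2 = S2" by blast
    finally show ?thesis using 2 by simp
  qed
  finally have "a + b = (\<Sum>g\<in>S1 \<union> S2. of_real (of_rat (c g)) * g)" by simp
  then show ?thesis unfolding CMZV_def using fin 1 2 by blast
qed

lemma cmzv_gen:
  assumes "g \<in> CMZV_generators N W"
  shows "of_real (of_rat q) * g \<in> CMZV N W"
  unfolding CMZV_def using assms
  by (intro CollectI exI[of _ "{g}"] exI[of _ "\<lambda>_. q"]) auto

lemma gen_cw: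
  assumes "adm w" "sum_list (map fst w) = W"
  shows "MPL (cw w) \<in> CMZV_generators 2 W"
proof -
  obtain s a r where w: "w = (s,a)#r" using adm_good(2)[OF assms(1)] by (metis list.exhaust prod.collapse)
  have g: "good w" and h: "(s,a) \<noteq> (1,1)" using assms(1) w by (auto simp: adm_def)
  have "cw w \<noteq> []" using w by (simp add: cw_def)
  moreover have "sum_list (map fst (cw w)) = W"
    using assms(2) by (simp add: cw_def case_prod_beta o_def)
  moreover have "\<forall>p\<in>set (cw w). fst p \<ge> 1 \<and> snd p ^ 2 = 1"
    using g by (auto simp: cw_def good_def)
  moreover have "hd (cw w) \<noteq> (1, 1)" using h w by (simp add: cw_def)
  ultimately show ?thesis unfolding CMZV_generators_def by blast
qed

lemma Vlim_cmzv: "admc W cs \<Longrightarrow> complex_of_real (Vlim cs) \<in> CMZV 2 W"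
proof (induction cs)
  case Nil then show ?case by (simp add: cmzv_0)
next
  case (Cons p cs)
  obtain q w where p: "p = (q, w)" by force
  have a: "adm w" "sum_list (map fst w) = W" and c: "admc W cs" using Cons.prems p by auto
  have "complex_of_real (Vlim (p # cs)) = of_real (of_rat q) * MPL (cw w) + complex_of_real (Vlim cs)"
    using p MPL_cw[OF a(1)] by simp
  also have "\<dots> \<in> CMZV 2 W" by (intro cmzv_add cmzv_gen gen_cw a Cons.IH c)
  finally show ?case .
qed

lemma target_eq:
  assumes "s \<ge> 1"
  shows "(\<Sum>n. (-1) ^ (n + 1) / (real (n + 1) ^ s * 2 ^ (n + 1) * real ((2 * (n + 1)) choose (n + 1)))) = G s 1"
proof -
  have u: "uu 1 = - 1 / 2" by (simp add: uu_def)
  have sm: "summable (\<lambda>n. beta s n * (- 1 / 2) ^ n)" by (rule h_summable) simp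
  have "G s 1 = (\<Sum>n. beta s n * (- 1 / 2) ^ n)" by (simp add: G_def h_def u)
  also have "\<dots> = (\<Sum>n. beta s (Suc n) * (- 1 / 2) ^ Suc n)"
    using suminf_split_head[OF sm] beta_0[OF assms] by simp
  also have "\<dots> = (\<Sum>n. (-1) ^ (n + 1) / (real (n + 1) ^ s * 2 ^ (n + 1) * real ((2 * (n + 1)) choose (n + 1))))"
  proof (intro suminf_cong)
    fix n :: nat
    have gen: "1 / (A * B) * (- 1 / 2) ^ (n + 1) = (-1) ^ (n + 1) / (A * 2 ^ (n + 1) * B)" for A B :: real
    proof -
      have "(- 1 / 2 :: real) ^ (n + 1) = (-1) ^ (n + 1) / 2 ^ (n + 1)"
        by (rule power_divide)
      then have "1 / (A * B) * (- 1 / 2) ^ (n + 1) = (-1) ^ (n + 1) / ((A * B) * 2 ^ (n + 1))" by simp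
      also have "(A * B) * 2 ^ (n + 1) = A * 2 ^ (n + 1) * B" by (simp add: ac_simps)
      finally show ?thesis .
    qed
    show "beta s (Suc n) * (- 1 / 2) ^ Suc n = (-1) ^ (n + 1) / (real (n + 1) ^ s * 2 ^ (n + 1) * real ((2 * (n + 1)) choose (n + 1)))"
      unfolding beta_def Suc_eq_plus1 by (rule gen)
  qed
  finally show ?thesis by simp
qed

theorem theorem4p18:
  fixes s :: nat
  assumes "s \<ge> 1"
  shows "complex_of_real
           (\<Sum>n. (-1) ^ (n + 1) /
               (real (n + 1) ^ s * 2 ^ (n + 1) * real ((2 * (n + 1)) choose (n + 1))))
         \<in> CMZV 2 s"
  unfolding target_eq[OF assms] G_at_1[OF assms]
  by (rule Vlim_cmzv[OF admc_comb[OF assms]])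

end
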